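(* Let $f:\{0,\dots,r-1\}^n\to\mathbb{R}$ be an $r$-valued fitness function with a neutral position $i\in\{1,\dots,n\}$. Consider the $r$-cGA optimizing $f$ with population size $K$. Then for every $j\in\{0,\dots,r-1\}$ and $T\in\mathbb{N}$, \[\Pr\left[\max_{t\in\{0,\dots,T\}}\left|p^{(t)}_{i,j}-p^{(0)}_{i,j}\right|\geq \frac{1}{2r}\right]\leq 2\exp\left(-\frac{K^2}{8Tr^2}\right).\]
   Context: Let $n\geq 1$, $r\geq 2$ be integers and $K>0$. The $r$-cGA maximizing $f$ maintains frequencies $p^{(t)}_{i,j}$ ($i\in\{1,\dots,n\}$, $j\in\{0,\dots,r-1\}$), initialized to $p^{(0)}_{i,j}=1/r$. In iteration $t$ it samples $x,y\in\{0,\dots,r-1\}^n$ independently, each position $i$ independently with $\Pr[x_i=j]=p^{(t)}_{i,j}$; if $f(x)<f(y)$ it swaps $x$ and $y$; then it sets $p^{(t+1)}_{i,j}=p^{(t)}_{i,j}+\frac1K(\mathbf{1}[x_i=j]-\mathbf{1}[y_i=j])$ for all $i,j$, with no margins restricting frequencies. A position $i$ is neutral for $f$ if for all $x,x'$ agreeing on all positions other than $i$ we have $f(x)=f(x')$. *)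

theory Defs
  imports "HOL-Probability.Probability"
begin

text \<open>Frequencies: a function p :: nat => nat => real, p i j for position i < n and value j < r.
  Search points: functions x :: nat => nat with x k < r for k < n and x k = 0 for k >= n.\<close>

type_synonym freqs = "nat \<Rightarrow> nat \<Rightarrow> real"
type_synonym point = "nat \<Rightarrow> nat"

definition search_space :: "nat \<Rightarrow> nat \<Rightarrow> point set" where
  "search_space r n = {x. (\<forall>k<n. x k < r) \<and> (\<forall>k. n \<le> k \<longrightarrow> x k = 0)}"

definition neutral_pos :: "nat \<Rightarrow> nat \<Rightarrow> (point \<Rightarrow> real) \<Rightarrow> nat \<Rightarrow> bool" where
  "neutral_pos r n f i \<longleftrightarrow>
     (\<forall>x\<in>search_space r n. \<forall>x'\<in>search_space r n.
        (\<forall>k<n. k \<noteq> i \<longrightarrow> x k = x' k) \<longrightarrow> f x = f x')"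

definition valid_row :: "nat \<Rightarrow> freqs \<Rightarrow> nat \<Rightarrow> bool" where
  "valid_row r p i \<longleftrightarrow> (\<forall>j<r. 0 \<le> p i j) \<and> (\<Sum>j<r. p i j) = 1"

text \<open>Distribution of one position: Pr[x_i = j] = p i j (j < r) when the row is a probability
  vector; otherwise (which can only happen without margins) uniform over {0..r-1} as a convention.\<close>
definition sample_pos :: "nat \<Rightarrow> freqs \<Rightarrow> nat \<Rightarrow> nat pmf" where
  "sample_pos r p i =
     (if valid_row r p i then embed_pmf (\<lambda>j. if j < r then p i j else 0)
      else pmf_of_set {..<r})"

definition sample :: "nat \<Rightarrow> nat \<Rightarrow> freqs \<Rightarrow> point pmf" where
  "sample r n p = Pi_pmf {..<n} 0 (\<lambda>i. sample_pos r p i)"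

definition cga_step :: "nat \<Rightarrow> nat \<Rightarrow> real \<Rightarrow> (point \<Rightarrow> real) \<Rightarrow> freqs \<Rightarrow> freqs pmf" where
  "cga_step r n K f p =
     do { x \<leftarrow> sample r n p;
          y \<leftarrow> sample r n p;
          let (x', y') = (if f x < f y then (y, x) else (x, y));
          return_pmf (\<lambda>i j. p i j + (of_bool (x' i = j) - of_bool (y' i = j)) / K) }"

definition init_freqs :: "nat \<Rightarrow> freqs" where
  "init_freqs r = (\<lambda>i j. 1 / real r)"

fun cga_run :: "nat \<Rightarrow> nat \<Rightarrow> real \<Rightarrow> (point \<Rightarrow> real) \<Rightarrow> nat \<Rightarrow> freqs list pmf" where
  "cga_run r n K f 0 = return_pmf [init_freqs r]"
| "cga_run r n K f (Suc T) =
     do { hs \<leftarrow> cga_run r n K f T;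
          p' \<leftarrow> cga_step r n K f (last hs);
          return_pmf (hs @ [p']) }"

end

theory Submission
  imports Defs
begin

lemma cosh_bound:
  fixes w :: real assumes "w \<ge> 0"
  shows "(exp w + exp (-w)) / 2 \<le> exp (w\<^sup>2 / 2)"
proof -
  have h: "-(2*w) * (1/2) + ln (1 + (1/2) * (exp (2*w) - 1)) \<le> (2*w)\<^sup>2 / 8"
    using Hoeffdings_lemma_aux[of "2*w" "1/2"] assms by simp
  have e1: "(2*w)\<^sup>2 / 8 = w\<^sup>2/2" by (simp add: power2_eq_square)
  have e2: "1 + (1/2) * (exp (2*w) - 1) = (1 + exp (2*w))/2" by (simp add: field_simps)
  have "ln (1 + (1/2) * (exp (2*w) - 1)) \<le> w + w\<^sup>2/2" using h e1 by linarith
  then have "ln ((1 + exp (2*w))/2) \<le> w + w\<^sup>2/2" by (simp only: e2)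
  hence "(1 + exp (2*w))/2 \<le> exp (w + w\<^sup>2/2)"
    by (smt (verit) exp_gt_zero exp_le_cancel_iff exp_ln)
  hence "exp (-w) * ((1 + exp (2*w))/2) \<le> exp (-w) * exp (w + w\<^sup>2/2)"
    by simp
  moreover have "exp (-w) * ((1 + exp (2*w))/2) = (exp w + exp (-w)) / 2"
    by (simp add: algebra_simps flip: exp_add)
  moreover have "exp (-w) * exp (w + w\<^sup>2/2) = exp (w\<^sup>2/2)"
    by (simp flip: exp_add)
  ultimately show ?thesis by simp
qed

lemma key_real:
  fixes q v :: real assumes "0 \<le> q" "q \<le> 1"
  shows "((1-q) + q*exp v) * ((1-q) + q*exp (-v)) \<le> exp (v\<^sup>2/2)"
proof -
  define S where "S = exp v + exp (-v)"
  have ev: "exp v * exp (-v) = 1" by (simp flip: exp_add)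
  have S2: "S \<ge> 2" 
  proof -
    have a: "exp v > 0" by simp
    have "exp v + exp (-v) - 2 = (exp v - 1)\<^sup>2 / exp v"
      using a by (simp add: exp_minus field_simps power2_eq_square)
    also have "\<dots> \<ge> 0" using a by simp
    finally show ?thesis by (simp add: S_def)
  qed
  have "((1-q) + q*exp v) * ((1-q) + q*exp (-v)) = 1 + q*(1-q)*(S-2)"
    unfolding S_def using ev by (simp add: algebra_simps power2_eq_square)
  also have "q*(1-q) \<le> 1/4" by (smt (verit) mult_const_minus_self_real_le[of q 1] power_one)
  hence "1 + q*(1-q)*(S-2) \<le> 1 + (1/4)*(S-2)" using S2 assms
    by (intro add_left_mono mult_right_mono) auto
  also have "\<dots> \<le> S/2" using S2 by (simp add: field_simps)
  also have "S/2 \<le> exp (v\<^sup>2/2)"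
  proof (cases "v \<ge> 0")
    case True thus ?thesis using cosh_bound[of v] by (simp add: S_def)
  next
    case False thus ?thesis using cosh_bound[of "-v"] by (simp add: S_def add.commute)
  qed
  finally show ?thesis .
qed

lemma set_sample_pos:
  assumes "r \<ge> 1"
  shows "set_pmf (sample_pos r p k) \<subseteq> {..<r}"
proof (cases "valid_row r p k")
  case True
  define g where "g = (\<lambda>j. if j < r then p k j else 0)"
  have nn: "\<And>x. 0 \<le> g x" using True unfolding g_def valid_row_def by auto
  have "(\<integral>\<^sup>+x. ennreal (g x) \<partial>count_space UNIV) = (\<Sum>x\<in>{..<r}. ennreal (g x))"
    by (rule nn_integral_count_space') (auto simp: g_def)
  also have "\<dots> = ennreal (\<Sum>x\<in>{..<r}. g x)" using nn by (intro sum_ennreal) auto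
  also have "(\<Sum>x\<in>{..<r}. g x) = 1" using True unfolding valid_row_def g_def by simp
  finally have one: "(\<integral>\<^sup>+x. ennreal (g x) \<partial>count_space UNIV) = 1" by simp
  have "sample_pos r p k = embed_pmf g" using True by (simp add: sample_pos_def g_def)
  then show ?thesis using set_embed_pmf[of g, OF nn one] by (auto simp: g_def split: if_splits)
next
  case False
  have "{..<r} \<noteq> {}" using assms by (metis lessThan_iff less_le_trans zero_less_one empty_iff)
  then show ?thesis using False by (simp add: sample_pos_def)
qed

lemma sample_decomp:
  assumes "i < n"
  shows "sample r n p = map_pmf (\<lambda>(a,g). g(i:=a))
           (pair_pmf (sample_pos r p i) (Pi_pmf ({..<n}-{i}) 0 (sample_pos r p)))"
proof -
  have "{..<n} = insert i ({..<n}-{i})" using assms by auto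
  then show ?thesis unfolding sample_def
    by (metis Pi_pmf_insert finite_Diff finite_lessThan insert_Diff_single Diff_iff insertI1 insert_absorb)
qed

lemma set_rest:
  assumes "r \<ge> 1" "g \<in> set_pmf (Pi_pmf ({..<n}-{i}) 0 (sample_pos r p))"
  shows "g i = 0" "\<And>a. a < r \<Longrightarrow> i < n \<Longrightarrow> g(i:=a) \<in> search_space r n" "g \<in> search_space r n"
proof -
  have g: "g \<in> PiE_dflt ({..<n}-{i}) 0 (set_pmf \<circ> sample_pos r p)"
    using set_Pi_pmf_subset'[of "{..<n}-{i}" 0 "sample_pos r p"] assms(2) by auto
  have sp: "\<And>k. set_pmf (sample_pos r p k) \<subseteq> {..<r}" using set_sample_pos assms(1) by blast
  show "g i = 0" using g by (auto simp: PiE_dflt_def)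
  show "g \<in> search_space r n" using g sp assms(1) unfolding search_space_def PiE_dflt_def
    by (auto; metis Diff_iff lessThan_iff subsetD singletonD gr_zeroI le_zero_eq not_one_le_zero)
  show "\<And>a. a < r \<Longrightarrow> i < n \<Longrightarrow> g(i:=a) \<in> search_space r n" using g sp assms(1)
    unfolding search_space_def PiE_dflt_def
    by (auto; metis Diff_iff lessThan_iff subsetD singletonD gr_zeroI le_zero_eq not_one_le_zero)
qed

lemma nn_swap:
  "(\<integral>\<^sup>+x. \<integral>\<^sup>+y. h x y \<partial>measure_pmf B \<partial>measure_pmf A) =
   (\<integral>\<^sup>+y. \<integral>\<^sup>+x. h x y \<partial>measure_pmf A \<partial>measure_pmf B)"
proof -
  have "(\<integral>\<^sup>+x. \<integral>\<^sup>+y. h x y \<partial>measure_pmf B \<partial>measure_pmf A) =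
        (\<integral>\<^sup>+z. h (fst z) (snd z) \<partial>measure_pmf (pair_pmf A B))"
    by (simp add: nn_integral_pair_pmf')
  also have "\<dots> = (\<integral>\<^sup>+z. h (snd z) (fst z) \<partial>measure_pmf (pair_pmf B A))"
    by (subst pair_commute_pmf) (simp add: case_prod_beta)
  also have "\<dots> = (\<integral>\<^sup>+y. \<integral>\<^sup>+x. h x y \<partial>measure_pmf A \<partial>measure_pmf B)"
    by (simp add: nn_integral_pair_pmf')
  finally show ?thesis .
qed

lemma one_point:
  "(\<integral>\<^sup>+a. ennreal (exp (v * of_bool (a = j))) \<partial>measure_pmf P) =
   ennreal ((1 - pmf P j) + pmf P j * exp v)"
proof -
  have eq: "\<And>a. ennreal (exp (v * of_bool (a = j))) =
     ennreal (exp v) * indicator {j} a + 1 * indicator (UNIV - {j}) a"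
    by (auto simp: indicator_def)
  have c: "emeasure (measure_pmf P) (UNIV - {j}) = ennreal (1 - pmf P j)"
    using measure_pmf.prob_compl[of "{j}" P]
    by (simp add: measure_pmf.emeasure_eq_measure measure_pmf_single)
  have "(\<integral>\<^sup>+a. ennreal (exp (v * of_bool (a = j))) \<partial>measure_pmf P) =
        ennreal (exp v) * ennreal (pmf P j) + ennreal (1 - pmf P j)"
    unfolding eq
    by (subst nn_integral_add) (auto simp: nn_integral_cmult_indicator emeasure_pmf_single c)
  also have "\<dots> = ennreal ((1 - pmf P j) + pmf P j * exp v)"
    using pmf_le_1[of P j]
    by (simp add: ennreal_mult[symmetric] ennreal_plus[symmetric] algebra_simps del: ennreal_plus)
  finally show ?thesis .
qed

lemma pair_bound:
  fixes K u :: real assumes "K > 0"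
  shows "(\<integral>\<^sup>+a. \<integral>\<^sup>+b. ennreal (exp (u * ((of_bool (a=j) - of_bool (b=j)) / K)))
             \<partial>measure_pmf P \<partial>measure_pmf P) \<le> ennreal (exp (u\<^sup>2 / (2*K\<^sup>2)))"
proof -
  define v where "v = u / K"
  have eq: "\<And>a b. ennreal (exp (u * ((of_bool (a=j) - of_bool (b=j)) / K))) =
     ennreal (exp (v * of_bool (a=j))) * ennreal (exp ((-v) * of_bool (b=j)))"
    by (simp add: v_def ennreal_mult[symmetric] field_simps flip: exp_add)
  have "(\<integral>\<^sup>+a. \<integral>\<^sup>+b. ennreal (exp (u * ((of_bool (a=j) - of_bool (b=j)) / K)))
             \<partial>measure_pmf P \<partial>measure_pmf P) =
        (\<integral>\<^sup>+a. ennreal (exp (v * of_bool (a=j))) \<partial>measure_pmf P) *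
        (\<integral>\<^sup>+b. ennreal (exp ((-v) * of_bool (b=j))) \<partial>measure_pmf P)"
    unfolding eq by (simp add: nn_integral_cmult nn_integral_multc)
  also have "\<dots> = ennreal (((1 - pmf P j) + pmf P j * exp v) * ((1 - pmf P j) + pmf P j * exp (-v)))"
    unfolding one_point using pmf_le_1[of P j]
    by (intro ennreal_mult[symmetric] add_nonneg_nonneg) auto
  also have "\<dots> \<le> ennreal (exp (v\<^sup>2/2))"
    using key_real[of "pmf P j" v] pmf_le_1[of P j] by (intro ennreal_leI) simp
  also have "v\<^sup>2/2 = u\<^sup>2 / (2*K\<^sup>2)" by (simp add: v_def power_divide)
  finally show ?thesis .
qed

lemma step_bound:
  fixes K u :: real
  assumes r1: "r \<ge> 1" and iN: "i < n" and neu: "neutral_pos r n f i" and K: "K > 0"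
  shows "(\<integral>\<^sup>+p'. ennreal (exp (u * (p' i j - p i j))) \<partial>measure_pmf (cga_step r n K f p))
          \<le> ennreal (exp (u\<^sup>2 / (2*K\<^sup>2)))"
proof -
  define P where "P = sample_pos r p i"
  define R where "R = Pi_pmf ({..<n}-{i}) 0 (sample_pos r p)"
  define D where "D = (\<lambda>c a b. (if c then (of_bool (b=j) - of_bool (a=j))
                                  else (of_bool (a=j) - of_bool (b=j))) / K :: real)"
  define C where "C = ennreal (exp (u\<^sup>2 / (2*K\<^sup>2)))"
  have E_le: "(\<integral>\<^sup>+a. \<integral>\<^sup>+b. ennreal (exp (u * D c a b)) \<partial>measure_pmf P \<partial>measure_pmf P) \<le> C" for c
  proof (cases c)
    case False then show ?thesis unfolding D_def C_def using pair_bound[OF K] by simp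
  next
    case True
    have "(\<integral>\<^sup>+a. \<integral>\<^sup>+b. ennreal (exp (u * D c a b)) \<partial>measure_pmf P \<partial>measure_pmf P) =
          (\<integral>\<^sup>+b. \<integral>\<^sup>+a. ennreal (exp (u * D c a b)) \<partial>measure_pmf P \<partial>measure_pmf P)"
      by (rule nn_swap)
    also have "\<dots> \<le> C" unfolding D_def C_def using True pair_bound[OF K] by simp
    finally show ?thesis .
  qed
  have neq: "f (g(i:=a)) = f g" if "a \<in> set_pmf P" "g \<in> set_pmf R" for a g
  proof -
    have "a < r" using that set_sample_pos[OF r1] unfolding P_def by auto
    have g: "g \<in> search_space r n" "g(i:=a) \<in> search_space r n"
      using set_rest[OF r1, of g n i p] that iN \<open>a < r\<close> unfolding R_def by auto
    have "\<forall>k<n. k \<noteq> i \<longrightarrow> (g(i:=a)) k = g k" by simp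
    then show ?thesis using neu g unfolding neutral_pos_def by blast
  qed
  have "(\<integral>\<^sup>+p'. ennreal (exp (u * (p' i j - p i j))) \<partial>measure_pmf (cga_step r n K f p)) =
        (\<integral>\<^sup>+x. \<integral>\<^sup>+y. ennreal (exp (u * D (f x < f y) (x i) (y i)))
            \<partial>measure_pmf (sample r n p) \<partial>measure_pmf (sample r n p))"
    unfolding cga_step_def D_def
    by (simp add: Let_def case_prod_beta) (intro nn_integral_cong; simp add: diff_divide_distrib)
  also have "\<dots> = (\<integral>\<^sup>+a. \<integral>\<^sup>+g. \<integral>\<^sup>+b. \<integral>\<^sup>+g'.
        ennreal (exp (u * D (f (g(i:=a)) < f (g'(i:=b))) a b))
        \<partial>measure_pmf R \<partial>measure_pmf P \<partial>measure_pmf R \<partial>measure_pmf P)"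
    unfolding sample_decomp[OF iN] P_def R_def by (simp add: nn_integral_pair_pmf')
  also have "\<dots> = (\<integral>\<^sup>+a. \<integral>\<^sup>+g. \<integral>\<^sup>+b. \<integral>\<^sup>+g'.
        ennreal (exp (u * D (f g < f g') a b))
        \<partial>measure_pmf R \<partial>measure_pmf P \<partial>measure_pmf R \<partial>measure_pmf P)"
    by (intro nn_integral_cong_AE AE_pmfI) (simp add: neq)
  also have "\<dots> = (\<integral>\<^sup>+g. \<integral>\<^sup>+a. \<integral>\<^sup>+b. \<integral>\<^sup>+g'.
        ennreal (exp (u * D (f g < f g') a b))
        \<partial>measure_pmf R \<partial>measure_pmf P \<partial>measure_pmf P \<partial>measure_pmf R)"
    by (rule nn_swap)
  also have "\<dots> = (\<integral>\<^sup>+g. \<integral>\<^sup>+a. \<integral>\<^sup>+g'. \<integral>\<^sup>+b.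
        ennreal (exp (u * D (f g < f g') a b))
        \<partial>measure_pmf P \<partial>measure_pmf R \<partial>measure_pmf P \<partial>measure_pmf R)"
    by (intro nn_integral_cong) (rule nn_swap)
  also have "\<dots> = (\<integral>\<^sup>+g. \<integral>\<^sup>+g'. \<integral>\<^sup>+a. \<integral>\<^sup>+b.
        ennreal (exp (u * D (f g < f g') a b))
        \<partial>measure_pmf P \<partial>measure_pmf P \<partial>measure_pmf R \<partial>measure_pmf R)"
    by (intro nn_integral_cong) (rule nn_swap)
  also have "\<dots> \<le> (\<integral>\<^sup>+g. \<integral>\<^sup>+g'. C \<partial>measure_pmf R \<partial>measure_pmf R)"
    by (intro nn_integral_mono E_le)
  also have "\<dots> = C" by simp
  finally show ?thesis unfolding C_def .
qed

fun ysf :: "real \<Rightarrow> real \<Rightarrow> nat \<Rightarrow> nat \<Rightarrow> freqs list \<Rightarrow> nat \<Rightarrow> real" where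
  "ysf \<sigma> l i j hs 0 = 0"
| "ysf \<sigma> l i j hs (Suc T) = (if ysf \<sigma> l i j hs T \<ge> l then ysf \<sigma> l i j hs T
     else \<sigma> * ((hs ! Suc T) i j - (hs ! 0) i j))"

lemma ysf_hit:
  assumes "l > 0" "t \<le> T" "\<sigma> * ((hs ! t) i j - (hs ! 0) i j) \<ge> l"
  shows "ysf \<sigma> l i j hs T \<ge> l"
  using assms
proof (induction T)
  case 0 then show ?case by simp
next
  case (Suc T)
  show ?case
  proof (cases "t \<le> T")
    case True then show ?thesis using Suc by auto
  next
    case False then have "t = Suc T" using Suc by simp
    then show ?thesis using Suc by auto
  qed
qed

lemma ysf_cases: "ysf \<sigma> l i j hs T \<ge> l \<or> ysf \<sigma> l i j hs T = \<sigma> * ((hs ! T) i j - (hs ! 0) i j)"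
  by (induction T) auto

lemma ysf_append: "T < length hs \<Longrightarrow> ysf \<sigma> l i j (hs @ [p]) T = ysf \<sigma> l i j hs T"
  by (induction T) (auto simp: nth_append)

lemma run_support:
  "hs \<in> set_pmf (cga_run r n K f T) \<Longrightarrow> length hs = Suc T \<and> hs ! 0 = init_freqs r"
proof (induction T arbitrary: hs)
  case 0 then show ?case by simp
next
  case (Suc T)
  have "hs \<in> (\<Union>hs0\<in>set_pmf (cga_run r n K f T). \<Union>p'\<in>set_pmf (cga_step r n K f (last hs0)). {hs0 @ [p']})"
    using Suc.prems by (simp only: cga_run.simps set_bind_pmf set_return_pmf)
  then obtain hs0 p' where "hs0 \<in> set_pmf (cga_run r n K f T)" "hs = hs0 @ [p']" by blast
  then show ?case using Suc.IH[of hs0] by (auto simp: nth_append)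
qed

lemma run_bound:
  fixes K s \<sigma> l :: real
  assumes r1: "r \<ge> 1" and iN: "i < n" and neu: "neutral_pos r n f i" and K: "K > 0"
    and sig: "\<sigma> = 1 \<or> \<sigma> = -1"
  shows "(\<integral>\<^sup>+hs. ennreal (exp (s * ysf \<sigma> l i j hs T)) \<partial>measure_pmf (cga_run r n K f T))
          \<le> ennreal (exp (real T * (s\<^sup>2 / (2*K\<^sup>2))))"
proof (induction T)
  case 0 then show ?case by simp
next
  case (Suc T)
  define c where "c = s\<^sup>2 / (2*K\<^sup>2)"
  have c0: "c \<ge> 0" unfolding c_def by simp
  have inner: "(\<integral>\<^sup>+p'. ennreal (exp (s * ysf \<sigma> l i j (hs @ [p']) (Suc T)))
      \<partial>measure_pmf (cga_step r n K f (last hs)))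
      \<le> ennreal (exp (s * ysf \<sigma> l i j hs T)) * ennreal (exp c)"
    if hs: "hs \<in> set_pmf (cga_run r n K f T)" for hs
  proof -
    have len: "length hs = Suc T" using run_support[OF hs] by simp
    have y: "\<And>p'. ysf \<sigma> l i j (hs @ [p']) (Suc T) = (if ysf \<sigma> l i j hs T \<ge> l then ysf \<sigma> l i j hs T
          else \<sigma> * (p' i j - (hs ! 0) i j))"
      using len by (simp add: ysf_append nth_append)
    show ?thesis
    proof (cases "ysf \<sigma> l i j hs T \<ge> l")
      case True
      have "exp 0 \<le> exp c" using c0 by simp
      then have "ennreal (exp (s * ysf \<sigma> l i j hs T)) * 1 \<le> ennreal (exp (s * ysf \<sigma> l i j hs T)) * ennreal (exp c)"
        by (intro mult_left_mono) auto
      then show ?thesis using True unfolding y by simp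
    next
      case False
      then have yv: "ysf \<sigma> l i j hs T = \<sigma> * ((last hs) i j - (hs ! 0) i j)"
        using ysf_cases[of l \<sigma> i j hs T] len last_conv_nth[of hs]
        by (metis Zero_not_Suc diff_Suc_1 list.size(3))
      have eq: "\<And>p'. ennreal (exp (s * ysf \<sigma> l i j (hs @ [p']) (Suc T))) =
         ennreal (exp (s * ysf \<sigma> l i j hs T)) * ennreal (exp ((s*\<sigma>) * (p' i j - (last hs) i j)))"
        unfolding y using False by (simp add: yv ennreal_mult[symmetric] algebra_simps del: ysf.simps flip: exp_add)
      have "(s*\<sigma>)\<^sup>2 = s\<^sup>2" using sig by (auto simp: power2_eq_square)
      then have sb: "(\<integral>\<^sup>+p'. ennreal (exp ((s*\<sigma>) * (p' i j - (last hs) i j)))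
               \<partial>measure_pmf (cga_step r n K f (last hs))) \<le> ennreal (exp c)"
        using step_bound[OF r1 iN neu K, where u="s*\<sigma>" and j=j and p="last hs"] unfolding c_def by simp
      show ?thesis unfolding eq
        by (subst nn_integral_cmult) (auto intro!: mult_left_mono sb)
    qed
  qed
  have "(\<integral>\<^sup>+hs. ennreal (exp (s * ysf \<sigma> l i j hs (Suc T))) \<partial>measure_pmf (cga_run r n K f (Suc T)))
     = (\<integral>\<^sup>+hs. (\<integral>\<^sup>+p'. ennreal (exp (s * ysf \<sigma> l i j (hs @ [p']) (Suc T)))
      \<partial>measure_pmf (cga_step r n K f (last hs))) \<partial>measure_pmf (cga_run r n K f T))"
    by simp
  also have "\<dots> \<le> (\<integral>\<^sup>+hs. ennreal (exp (s * ysf \<sigma> l i j hs T)) * ennreal (exp c) \<partial>measure_pmf (cga_run r n K f T))"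
    by (intro nn_integral_mono_AE AE_pmfI inner)
  also have "\<dots> = (\<integral>\<^sup>+hs. ennreal (exp (s * ysf \<sigma> l i j hs T)) \<partial>measure_pmf (cga_run r n K f T)) * ennreal (exp c)"
    by (simp add: nn_integral_multc)
  also have "\<dots> \<le> ennreal (exp (real T * c)) * ennreal (exp c)"
    using Suc.IH unfolding c_def by (intro mult_right_mono) auto
  also have "\<dots> = ennreal (exp (real (Suc T) * c))"
    by (simp add: ennreal_mult[symmetric] algebra_simps flip: exp_add)
  finally show ?case unfolding c_def .
qed

lemma tail_bound:
  fixes K \<sigma> l :: real
  assumes r1: "r \<ge> 1" and iN: "i < n" and neu: "neutral_pos r n f i" and K: "K > 0"
    and sig: "\<sigma> = 1 \<or> \<sigma> = -1" and T: "T > 0" and l: "l > 0"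
  shows "measure_pmf.prob (cga_run r n K f T) {hs. ysf \<sigma> l i j hs T \<ge> l}
          \<le> exp (- (l\<^sup>2 * K\<^sup>2) / (2 * real T))"
proof -
  define s where "s = l * K\<^sup>2 / real T"
  have s0: "s \<ge> 0" using l T unfolding s_def by simp
  let ?M = "measure_pmf (cga_run r n K f T)"
  let ?B = "{hs. ysf \<sigma> l i j hs T \<ge> l}"
  have "emeasure ?M ?B = (\<integral>\<^sup>+hs. indicator ?B hs \<partial>?M)" by simp
  also have "\<dots> \<le> (\<integral>\<^sup>+hs. ennreal (exp (-(s*l))) * ennreal (exp (s * ysf \<sigma> l i j hs T)) \<partial>?M)"
  proof (intro nn_integral_mono)
    fix hs
    show "indicator ?B hs \<le> ennreal (exp (-(s*l))) * ennreal (exp (s * ysf \<sigma> l i j hs T))"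
    proof (cases "hs \<in> ?B")
      case True
      then have "s * l \<le> s * ysf \<sigma> l i j hs T" using s0 by (intro mult_left_mono) auto
      then have "1 \<le> exp (-(s*l)) * exp (s * ysf \<sigma> l i j hs T)"
        by (simp flip: exp_add)
      then show ?thesis using True by (simp add: ennreal_mult[symmetric])
    qed simp
  qed
  also have "\<dots> = ennreal (exp (-(s*l))) * (\<integral>\<^sup>+hs. ennreal (exp (s * ysf \<sigma> l i j hs T)) \<partial>?M)"
    by (simp add: nn_integral_cmult)
  also have "\<dots> \<le> ennreal (exp (-(s*l))) * ennreal (exp (real T * (s\<^sup>2 / (2*K\<^sup>2))))"
    by (intro mult_left_mono run_bound[OF r1 iN neu K sig]) auto
  also have "\<dots> = ennreal (exp (-(s*l) + real T * (s\<^sup>2 / (2*K\<^sup>2))))"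
    by (simp add: ennreal_mult[symmetric] flip: exp_add)
  also have "-(s*l) + real T * (s\<^sup>2 / (2*K\<^sup>2)) = - (l\<^sup>2 * K\<^sup>2) / (2 * real T)"
    using T K unfolding s_def by (simp add: field_simps power2_eq_square)
  finally have "ennreal (measure_pmf.prob (cga_run r n K f T) ?B) \<le> ennreal (exp (- (l\<^sup>2 * K\<^sup>2) / (2 * real T)))"
    by (simp add: measure_pmf.emeasure_eq_measure)
  then show ?thesis by (simp add: ennreal_le_iff)
qed

theorem theorem2:
  fixes n r :: nat and K :: real and f :: "point \<Rightarrow> real" and i j T :: nat
  assumes "n \<ge> 1" and "r \<ge> 2" and "K > 0"
    and "i < n" and "neutral_pos r n f i"
    and "j < r"
  shows "measure_pmf.prob (cga_run r n K f T)
           {hs. Max ((\<lambda>t. \<bar>(hs ! t) i j - (hs ! 0) i j\<bar>) ` {0..T}) \<ge> 1 / (2 * real r)}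
         \<le> 2 * exp (- (K ^ 2) / (8 * real T * (real r) ^ 2))"
proof (cases "T = 0")
  case True
  then show ?thesis using measure_pmf.prob_le_1 by simp
next
  case False
  then have T: "T > 0" by simp
  have r1: "r \<ge> 1" using assms by simp
  define l :: real where "l = 1 / (2 * real r)"
  have l: "l > 0" using assms unfolding l_def by simp
  let ?M = "cga_run r n K f T"
  let ?A = "{hs. Max ((\<lambda>t. \<bar>(hs ! t) i j - (hs ! 0) i j\<bar>) ` {0..T}) \<ge> 1 / (2 * real r)}"
  let ?B1 = "{hs. ysf 1 l i j hs T \<ge> l}"
  let ?B2 = "{hs. ysf (-1) l i j hs T \<ge> l}"
  have sub: "?A \<inter> set_pmf ?M \<subseteq> ?B1 \<union> ?B2"
  proof
    fix hs assume hs: "hs \<in> ?A \<inter> set_pmf ?M"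
    let ?F = "(\<lambda>t. \<bar>(hs ! t) i j - (hs ! 0) i j\<bar>)"
    have "Max (?F ` {0..T}) \<in> ?F ` {0..T}" by (intro Max_in) auto
    then obtain t where t0: "t \<in> {0..T}" and t2: "Max (?F ` {0..T}) = ?F t" by (meson imageE)
    have t: "t \<le> T" "Max (?F ` {0..T}) = ?F t" using t0 t2 by auto
    then have "?F t \<ge> l" using hs unfolding l_def by simp
    then have "1 * ((hs ! t) i j - (hs ! 0) i j) \<ge> l \<or> (-1) * ((hs ! t) i j - (hs ! 0) i j) \<ge> l"
      by (simp add: abs_if split: if_splits)
    then show "hs \<in> ?B1 \<union> ?B2"
      using ysf_hit[OF l t(1), of 1 hs i j] ysf_hit[OF l t(1), of "-1" hs i j] by auto
  qed
  have "measure_pmf.prob ?M ?A = measure_pmf.prob ?M (?A \<inter> set_pmf ?M)"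
    by (simp add: measure_Int_set_pmf)
  also have "\<dots> \<le> measure_pmf.prob ?M (?B1 \<union> ?B2)"
    using sub by (intro measure_pmf.finite_measure_mono) auto
  also have "\<dots> \<le> measure_pmf.prob ?M ?B1 + measure_pmf.prob ?M ?B2"
    by (intro measure_Un_le) auto
  also have "\<dots> \<le> exp (- (l\<^sup>2 * K\<^sup>2) / (2 * real T)) + exp (- (l\<^sup>2 * K\<^sup>2) / (2 * real T))"
    by (intro add_mono tail_bound[OF r1 assms(4,5,3) _ T l]) auto
  also have "- (l\<^sup>2 * K\<^sup>2) / (2 * real T) = - (K ^ 2) / (8 * real T * (real r) ^ 2)"
    unfolding l_def using assms(2) T by (simp add: power_divide power_mult_distrib)
  finally show ?thesis by simp
qed

end
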